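(* Let $G>I$ be a finite group with trivial center $Z(G)=I$ and let $\sigma_1,\sigma_2\in G$ with $G=\langle\sigma_1,\sigma_2\rangle$ and $o(\sigma_1\sigma_2)=2$. Then: (a) For $e_1=[\sigma_1,\sigma_1,\sigma_2,\sigma_1\sigma_2\sigma_1^{-1}]$ and $e_2=e_1^{\beta_{13}}$ we have $e_2=[\sigma_1,\sigma_2\sigma_1\sigma_2^{-1},\sigma_2,\sigma_2]$, and $Z_1=\{e_1,e_2\}$ is an orbit of length $2$ under $B_4$, on which $\beta_{12}$ fixes $e_1$ and $e_2$, $\beta_{13}$ and $\beta_{14}$ interchange $e_1$ and $e_2$, $\rho_4(B_4)\cong C_2$, and $g_{Z_1}=0$. (b) For $e_3=[\sigma_1,\sigma_2,\sigma_1,\sigma_2]$ and $e_4=e_3^{\beta_{12}}$ we have $e_4=[\sigma_1,\sigma_2,\sigma_2^{-1}\sigma_1\sigma_2,\sigma_1\sigma_2\sigma_1^{-1}]$, and $Z_2=\{e_3,e_4\}$ is an orbit of length $2$ under $B_4$, on which $\beta_{12}$ and $\beta_{14}$ interchange $e_3,e_4$, $\beta_{13}$ fixes $e_3$ and $e_4$, $\rho_4(B_4)\cong C_2$, and $g_{Z_2}=0$. (c) For $e_5=[\sigma_1,\sigma_2,\sigma_2,\sigma_2^{-1}\sigma_1\sigma_2]$ and $e_6=e_5^{\beta_{12}}$ we have $e_6=[\sigma_1,\sigma_2,\sigma_1\sigma_2\sigma_1^{-1},\sigma_1]$, and $Z_3=\{e_5,e_6\}$ is an orbit of length $2$ under $B_4$,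 on which $\beta_{12}$ and $\beta_{13}$ interchange $e_5,e_6$, $\beta_{14}$ fixes $e_5$ and $e_6$, $\rho_4(B_4)\cong C_2$, and $g_{Z_3}=0$.
   Context: $\iota$ denotes the identity of $G$ and $I$ the trivial group. For conjugacy classes $C_1,\dots,C_4$ of $G$, $\Sigma^i(C_1,\dots,C_4)$ is the set of $G$-conjugacy classes $[\sigma_1,\dots,\sigma_4]$ (under simultaneous conjugation) of tuples with $\sigma_j\in C_j$, $\langle\sigma_1,\dots,\sigma_4\rangle=G$, $\sigma_1\sigma_2\sigma_3\sigma_4=\iota$. The Hurwitz braid group $H_4=\langle\beta_2,\beta_3,\beta_4\rangle$ acts from the right by $[\underline{\sigma}]^{\beta_2}=[\sigma_1\sigma_2\sigma_1^{-1},\sigma_1,\sigma_3,\sigma_4]$, $[\underline{\sigma}]^{\beta_3}=[\sigma_1,\sigma_2\sigma_3\sigma_2^{-1},\sigma_2,\sigma_4]$, $[\underline{\sigma}]^{\beta_4}=[\sigma_1,\sigma_2,\sigma_3\sigma_4\sigma_3^{-1},\sigma_3]$. The pure braid group $B_4$ is generated by $\beta_{12}=\beta_2^2$, $\beta_{13}=\beta_2^{-1}\beta_3^2\beta_2$, $\beta_{14}=\beta_2^{-1}\beta_3^{-1}\beta_4^2\beta_3\beta_2$, $\beta_{23}=\beta_3^2$, $\beta_{24}=\beta_3^{-1}\beta_4^2\beta_3$, $\beta_{34}=\beta_4^2$ and preserves each $\Sigma^i(C_1,\dots,C_4)$; $\rho_4$ denotes the induced permutation representation. For a $B_4$-orbit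 $Z$, let $z_{1j}$ be the number of cycles (fixed points included) of $\rho_4(\beta_{1j})$ on $Z$; the genus is $g_Z=1-|Z|+\frac12(3|Z|-z_{12}-z_{13}-z_{14})$. *)

theory Defs
  imports "HOL-Algebra.Algebra"
begin

definition grp_center :: "('a, 'b) monoid_scheme \<Rightarrow> 'a set" where
  "grp_center G = {z \<in> carrier G. \<forall>h \<in> carrier G. z \<otimes>\<^bsub>G\<^esub> h = h \<otimes>\<^bsub>G\<^esub> z}"

definition conj_class :: "('a, 'b) monoid_scheme \<Rightarrow> 'a \<Rightarrow> 'a set" where
  "conj_class G x = {g \<otimes>\<^bsub>G\<^esub> x \<otimes>\<^bsub>G\<^esub> inv\<^bsub>G\<^esub> g | g. g \<in> carrier G}"

text \<open>Tuples are lists of length 4; [sigma] is the class under simultaneous conjugation.\<close>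
definition tclass :: "('a, 'b) monoid_scheme \<Rightarrow> 'a list \<Rightarrow> 'a list set" where
  "tclass G t = {map (\<lambda>x. g \<otimes>\<^bsub>G\<^esub> x \<otimes>\<^bsub>G\<^esub> inv\<^bsub>G\<^esub> g) t | g. g \<in> carrier G}"

definition Sigma_i :: "('a, 'b) monoid_scheme \<Rightarrow> 'a set \<Rightarrow> 'a set \<Rightarrow> 'a set \<Rightarrow> 'a set \<Rightarrow> 'a list set set" where
  "Sigma_i G C1 C2 C3 C4 = {tclass G t | t. length t = 4 \<and>
      t!0 \<in> C1 \<and> t!1 \<in> C2 \<and> t!2 \<in> C3 \<and> t!3 \<in> C4 \<and>
      generate G (set t) = carrier G \<and>
      t!0 \<otimes>\<^bsub>G\<^esub> t!1 \<otimes>\<^bsub>G\<^esub> t!2 \<otimes>\<^bsub>G\<^esub> t!3 = \<one>\<^bsub>G\<^esub>}"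

text \<open>A letter (i, True) is beta_i, (i, False) is beta_i inverse, for i in {2,3,4}.
  beta_i acts on positions i-1, i (1-based), i.e. list indices i-2, i-1.\<close>
definition hstep :: "('a, 'b) monoid_scheme \<Rightarrow> nat \<times> bool \<Rightarrow> 'a list \<Rightarrow> 'a list" where
  "hstep G l t = (let i = fst l; x = t ! (i - 2); y = t ! (i - 1) in
     if snd l then t[i - 2 := x \<otimes>\<^bsub>G\<^esub> y \<otimes>\<^bsub>G\<^esub> inv\<^bsub>G\<^esub> x, i - 1 := x]
     else t[i - 2 := y, i - 1 := inv\<^bsub>G\<^esub> y \<otimes>\<^bsub>G\<^esub> x \<otimes>\<^bsub>G\<^esub> y])"

text \<open>Right action of a braid word, letters applied from left to right.\<close>
definition act_word :: "('a, 'b) monoid_scheme \<Rightarrow> (nat \<times> bool) list \<Rightarrow> 'a list \<Rightarrow> 'a list" where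
  "act_word G w t = fold (hstep G) w t"

definition inv_word :: "(nat \<times> bool) list \<Rightarrow> (nat \<times> bool) list" where
  "inv_word w = rev (map (\<lambda>(i, b). (i, \<not> b)) w)"

definition beta12 :: "(nat \<times> bool) list" where "beta12 = [(2,True),(2,True)]"
definition beta13 :: "(nat \<times> bool) list" where
  "beta13 = inv_word [(2,True)] @ [(3,True),(3,True)] @ [(2,True)]"
definition beta14 :: "(nat \<times> bool) list" where
  "beta14 = inv_word [(3,True),(2,True)] @ [(4,True),(4,True)] @ [(3,True),(2,True)]"
definition beta23 :: "(nat \<times> bool) list" where "beta23 = [(3,True),(3,True)]"
definition beta24 :: "(nat \<times> bool) list" where
  "beta24 = inv_word [(3,True)] @ [(4,True),(4,True)] @ [(3,True)]"
definition beta34 :: "(nat \<times> bool) list" where "beta34 = [(4,True),(4,True)]"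

text \<open>Words representing elements of the pure braid group B_4: products of the
  generators beta_ij and their inverses.\<close>
definition pure_gens :: "(nat \<times> bool) list set" where
  "pure_gens = {beta12, beta13, beta14, beta23, beta24, beta34}"

definition pure_words :: "(nat \<times> bool) list set" where
  "pure_words = {concat ws | ws. set ws \<subseteq> pure_gens \<union> inv_word ` pure_gens}"

definition cact :: "('a, 'b) monoid_scheme \<Rightarrow> (nat \<times> bool) list \<Rightarrow> 'a list set \<Rightarrow> 'a list set" where
  "cact G w A = image (act_word G w) A"

definition B4_orbit :: "('a, 'b) monoid_scheme \<Rightarrow> 'a list set \<Rightarrow> 'a list set set" where
  "B4_orbit G A = {cact G w A | w. w \<in> pure_words}"

definition rho4 :: "('a, 'b) monoid_scheme \<Rightarrow> 'a list set set \<Rightarrow> (nat \<times> bool) list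
    \<Rightarrow> 'a list set \<Rightarrow> 'a list set" where
  "rho4 G Z w = restrict (cact G w) Z"

definition rho4_image :: "('a, 'b) monoid_scheme \<Rightarrow> 'a list set set
    \<Rightarrow> ('a list set \<Rightarrow> 'a list set) set" where
  "rho4_image G Z = {rho4 G Z w | w. w \<in> pure_words}"

definition ncycles :: "('c \<Rightarrow> 'c) \<Rightarrow> 'c set \<Rightarrow> nat" where
  "ncycles f Z = card {{(f ^^ n) x | n. True} | x. x \<in> Z}"

definition genus :: "('a, 'b) monoid_scheme \<Rightarrow> 'a list set set \<Rightarrow> real" where
  "genus G Z = 1 - real (card Z) +
     (3 * real (card Z) - real (ncycles (cact G beta12) Z) - real (ncycles (cact G beta13) Z)
        - real (ncycles (cact G beta14) Z)) / 2"

end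

theory Submission
  imports Defs
begin


context group begin

lemma cancel1: "x \<in> carrier G \<Longrightarrow> y \<in> carrier G \<Longrightarrow> x \<otimes> (inv x \<otimes> y) = y"
  by (simp add: m_assoc[symmetric])
lemma cancel2: "x \<in> carrier G \<Longrightarrow> y \<in> carrier G \<Longrightarrow> inv x \<otimes> (x \<otimes> y) = y"
  by (simp add: m_assoc[symmetric])

lemmas gs = m_assoc inv_mult_group cancel1 cancel2

lemma hstep_simps:
  "hstep G (2,True) [a,b,c,d] = [a \<otimes> b \<otimes> inv a, a, c, d]"
  "hstep G (2,False) [a,b,c,d] = [b, inv b \<otimes> a \<otimes> b, c, d]"
  "hstep G (3,True) [a,b,c,d] = [a, b \<otimes> c \<otimes> inv b, b, d]"
  "hstep G (3,False) [a,b,c,d] = [a, c, inv c \<otimes> b \<otimes> c, d]"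
  "hstep G (4,True) [a,b,c,d] = [a, b, c \<otimes> d \<otimes> inv c, c]"
  "hstep G (4,False) [a,b,c,d] = [a, b, d, inv d \<otimes> c \<otimes> d]"
  by (simp_all add: hstep_def)

definition tv :: "'a list \<Rightarrow> bool" where
  "tv t \<longleftrightarrow> length t = 4 \<and> set t \<subseteq> carrier G"

definition lv :: "nat \<times> bool \<Rightarrow> bool" where
  "lv l \<longleftrightarrow> fst l \<in> {2,3,4}"

lemma four: "length t = 4 \<Longrightarrow> \<exists>a b c d. t = [a,b,c,d]"
  by (cases t rule: list.exhaust; cases "tl t" rule: list.exhaust; cases "tl (tl t)" rule: list.exhaust;
      cases "tl (tl (tl t))" rule: list.exhaust) (auto simp: numeral_eq_Suc)

lemma lv_cases: "lv l \<Longrightarrow> l \<in> {(2,True),(2,False),(3,True),(3,False),(4,True),(4,False)}"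
  unfolding lv_def by (cases l) auto

lemma hstep_tv: "lv l \<Longrightarrow> tv t \<Longrightarrow> tv (hstep G l t)"
  unfolding tv_def
  apply (drule lv_cases)
  apply (elim conjE)
  apply (drule four)
  apply (elim exE)
  apply (auto simp: hstep_simps)
  done

lemma hstep_conj: "lv l \<Longrightarrow> tv t \<Longrightarrow> g \<in> carrier G \<Longrightarrow>
   hstep G l (map (\<lambda>x. g \<otimes> x \<otimes> inv g) t) = map (\<lambda>x. g \<otimes> x \<otimes> inv g) (hstep G l t)"
  unfolding tv_def
  apply (drule lv_cases)
  apply (elim conjE)
  apply (drule four)
  apply (elim exE)
  apply (auto simp: hstep_simps gs)
  done

lemma hstep_inv: "lv (i,b) \<Longrightarrow> tv t \<Longrightarrow> hstep G (i, \<not> b) (hstep G (i,b) t) = t"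
  unfolding tv_def
  apply (drule lv_cases)
  apply (elim conjE)
  apply (drule four)
  apply (elim exE)
  apply (auto simp: hstep_simps gs)
  done

definition wv :: "(nat \<times> bool) list \<Rightarrow> bool" where
  "wv w \<longleftrightarrow> (\<forall>l\<in>set w. lv l)"

lemma act_Cons: "act_word G (l # w) t = act_word G w (hstep G l t)"
  by (simp add: act_word_def)
lemma act_append: "act_word G (u @ w) t = act_word G w (act_word G u t)"
  by (simp add: act_word_def)
lemma act_Nil: "act_word G [] t = t"
  by (simp add: act_word_def)

lemma act_tv: "wv w \<Longrightarrow> tv t \<Longrightarrow> tv (act_word G w t)"
  by (induction w arbitrary: t) (auto simp: wv_def act_Nil act_Cons hstep_tv)

lemma act_conj: "wv w \<Longrightarrow> tv t \<Longrightarrow> g \<in> carrier G \<Longrightarrow>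
   act_word G w (map (\<lambda>x. g \<otimes> x \<otimes> inv g) t) = map (\<lambda>x. g \<otimes> x \<otimes> inv g) (act_word G w t)"
  by (induction w arbitrary: t) (auto simp: wv_def act_Nil act_Cons hstep_tv hstep_conj)

lemma act_inv: "wv w \<Longrightarrow> tv t \<Longrightarrow> act_word G (inv_word w) (act_word G w t) = t"
proof (induction w arbitrary: t)
  case Nil
  then show ?case by (simp add: inv_word_def act_Nil)
next
  case (Cons l w)
  obtain i b where l: "l = (i,b)" by (cases l)
  have lv: "lv l" and wv: "wv w" using Cons.prems by (auto simp: wv_def)
  have tv': "tv (hstep G l t)" using hstep_tv lv Cons.prems by blast
  have "inv_word (l # w) = inv_word w @ [(i, \<not> b)]" by (simp add: inv_word_def l)
  then have "act_word G (inv_word (l # w)) (act_word G (l # w) t)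
      = hstep G (i, \<not> b) (act_word G (inv_word w) (act_word G w (hstep G l t)))"
    by (simp add: act_append act_Cons act_Nil)
  also have "\<dots> = hstep G (i, \<not> b) (hstep G (i,b) t)" using Cons.IH[OF wv tv'] l by simp
  also have "\<dots> = t" using hstep_inv lv l Cons.prems by blast
  finally show ?case .
qed

lemma wv_inv: "wv (inv_word w) = wv w"
  by (auto simp: wv_def inv_word_def lv_def)

lemma tclass_alt: "tclass G t = (\<lambda>g. map (\<lambda>x. g \<otimes> x \<otimes> inv g) t) ` carrier G"
  by (auto simp: tclass_def)

lemma tv_conj: "tv t \<Longrightarrow> g \<in> carrier G \<Longrightarrow> tv (map (\<lambda>x. g \<otimes> x \<otimes> inv g) t)"
  by (auto simp: tv_def)

lemma tclass_tv: "tv t \<Longrightarrow> tclass G t \<subseteq> Collect tv"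
  by (auto simp: tclass_alt tv_conj)

lemma self_tclass: "tv t \<Longrightarrow> t \<in> tclass G t"
proof -
  assume "tv t"
  have "map (\<lambda>x. \<one> \<otimes> x \<otimes> inv \<one>) t = t" 
  proof (rule map_idI)
    fix x assume "x \<in> set t"
    then have "x \<in> carrier G" using \<open>tv t\<close> unfolding tv_def by blast
    then show "\<one> \<otimes> x \<otimes> inv \<one> = x" by simp
  qed
  then have "t = map (\<lambda>x. \<one> \<otimes> x \<otimes> inv \<one>) t \<and> \<one> \<in> carrier G" by simp
  then show ?thesis unfolding tclass_def by blast
qed

lemma cact_tclass: "wv w \<Longrightarrow> tv t \<Longrightarrow> cact G w (tclass G t) = tclass G (act_word G w t)"
  unfolding cact_def tclass_alt image_image
  by (rule image_cong) (auto simp: act_conj)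

lemma conj_conj: "tv t \<Longrightarrow> g \<in> carrier G \<Longrightarrow> h \<in> carrier G \<Longrightarrow>
  map (\<lambda>x. h \<otimes> x \<otimes> inv h) (map (\<lambda>x. g \<otimes> x \<otimes> inv g) t) = map (\<lambda>x. (h \<otimes> g) \<otimes> x \<otimes> inv (h \<otimes> g)) t"
  by (induction t) (auto simp: tv_def gs)

lemma tclass_conj: "tv t \<Longrightarrow> g \<in> carrier G \<Longrightarrow> tclass G (map (\<lambda>x. g \<otimes> x \<otimes> inv g) t) = tclass G t"
proof -
  assume t: "tv t" and g: "g \<in> carrier G"
  show ?thesis
  proof
    show "tclass G (map (\<lambda>x. g \<otimes> x \<otimes> inv g) t) \<subseteq> tclass G t"
      unfolding tclass_alt using conj_conj[OF t g] g by auto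
    show "tclass G t \<subseteq> tclass G (map (\<lambda>x. g \<otimes> x \<otimes> inv g) t)"
    proof
      fix s assume "s \<in> tclass G t"
      then obtain h where h: "h \<in> carrier G" "s = map (\<lambda>x. h \<otimes> x \<otimes> inv h) t" unfolding tclass_alt by auto
      have hg: "h \<otimes> inv g \<in> carrier G" using h g by simp
      have "(h \<otimes> inv g) \<otimes> g = h" using h g by (simp add: m_assoc)
      then have "s = map (\<lambda>x. (h \<otimes> inv g) \<otimes> x \<otimes> inv (h \<otimes> inv g)) (map (\<lambda>x. g \<otimes> x \<otimes> inv g) t)"
        using conj_conj[OF t g hg] h by simp
      then show "s \<in> tclass G (map (\<lambda>x. g \<otimes> x \<otimes> inv g) t)" unfolding tclass_alt using hg by blast
    qed
  qed
qed

lemma tclass_eqD: "tclass G t = tclass G t' \<Longrightarrow> tv t \<Longrightarrow> \<exists>g\<in>carrier G. t = map (\<lambda>x. g \<otimes> x \<otimes> inv g) t'"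
proof -
  assume a: "tclass G t = tclass G t'" and b: "tv t"
  have "t \<in> tclass G t'" using self_tclass[OF b] a by simp
  then show ?thesis unfolding tclass_alt by blast
qed

lemma cact_append: "cact G (u @ w) A = cact G w (cact G u A)"
  by (auto simp: cact_def act_append image_image)

lemma cact_Nil: "cact G [] A = A"
  by (simp add: cact_def act_Nil)

lemma cact_inv: "wv w \<Longrightarrow> A \<subseteq> Collect tv \<Longrightarrow> cact G (inv_word w) (cact G w A) = A"
proof -
  assume w: "wv w" and A: "A \<subseteq> Collect tv"
  have "(\<lambda>t. act_word G (inv_word w) (act_word G w t)) ` A = (\<lambda>t. t) ` A"
  proof (rule image_cong)
    fix t assume "t \<in> A"
    then show "act_word G (inv_word w) (act_word G w t) = t" using act_inv[OF w] A by blast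
  qed simp
  then show ?thesis unfolding cact_def image_image by simp
qed

definition sw :: "(nat \<times> bool) list \<Rightarrow> 'a list set \<Rightarrow> 'a list set \<Rightarrow> bool" where
  "sw w e f \<longleftrightarrow> (cact G w e = e \<and> cact G w f = f) \<or> (cact G w e = f \<and> cact G w f = e)"

lemma sw_inv: "sw w e f \<Longrightarrow> wv w \<Longrightarrow> e \<subseteq> Collect tv \<Longrightarrow> f \<subseteq> Collect tv \<Longrightarrow> sw (inv_word w) e f"
proof -
  assume s: "sw w e f" and w: "wv w" and e: "e \<subseteq> Collect tv" and f: "f \<subseteq> Collect tv"
  have E: "cact G (inv_word w) (cact G w e) = e" by (rule cact_inv[OF w e])
  have F: "cact G (inv_word w) (cact G w f) = f" by (rule cact_inv[OF w f])
  show ?thesis using s unfolding sw_def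
  proof
    assume "cact G w e = e \<and> cact G w f = f" then show "(cact G (inv_word w) e = e \<and> cact G (inv_word w) f = f) \<or> (cact G (inv_word w) e = f \<and> cact G (inv_word w) f = e)" using E F by simp
  next
    assume "cact G w e = f \<and> cact G w f = e" then show "(cact G (inv_word w) e = e \<and> cact G (inv_word w) f = f) \<or> (cact G (inv_word w) e = f \<and> cact G (inv_word w) f = e)" using E F by simp
  qed
qed

lemma sw_append: "sw u e f \<Longrightarrow> sw w e f \<Longrightarrow> sw (u @ w) e f"
  unfolding sw_def by (auto simp: cact_append)

lemma wv_gens: "w \<in> pure_gens \<Longrightarrow> wv w"
  by (auto simp: pure_gens_def beta12_def beta13_def beta14_def beta23_def beta24_def beta34_def
      inv_word_def wv_def lv_def)

lemma sw_pure:
  assumes "e \<subseteq> Collect tv" "f \<subseteq> Collect tv" "\<And>w. w \<in> pure_gens \<Longrightarrow> sw w e f"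
    and "w \<in> pure_words"
  shows "sw w e f"
proof -
  obtain ws where w: "w = concat ws" "set ws \<subseteq> pure_gens \<union> inv_word ` pure_gens"
    using assms(4) by (auto simp: pure_words_def)
  have "sw (concat ws) e f" using w(2)
  proof (induction ws)
    case Nil
    then show ?case by (simp add: sw_def cact_Nil)
  next
    case (Cons u ws)
    have "sw u e f" using Cons.prems assms(1,2,3) sw_inv wv_gens by auto
    then show ?case using Cons sw_append by simp
  qed
  then show ?thesis using w by simp
qed

end


locale thm_ctx = group G for G (structure) +
  fixes s1 s2 c
  assumes s1: "s1 \<in> carrier G" and c: "c \<in> carrier G" and cc: "c \<otimes> c = \<one>"
    and s2: "s2 = inv s1 \<otimes> c"
begin

lemma invc: "inv c = c"
  using cc c by (metis inv_equality)

lemma cc2: "x \<in> carrier G \<Longrightarrow> c \<otimes> (c \<otimes> x) = x"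
  using cc c by (simp add: m_assoc[symmetric])

lemmas cs = act_word_def beta12_def beta13_def beta14_def beta23_def beta24_def beta34_def
  inv_word_def hstep_simps gs s2 invc cc2 cc s1 c

lemma ca_beta12_1: "act_word G beta12 [s1, s1, s2, s1 \<otimes> s2 \<otimes> inv s1] = map (\<lambda>x. \<one> \<otimes> x \<otimes> inv \<one>) [s1, s1, s2, s1 \<otimes> s2 \<otimes> inv s1]"
  by (simp add: cs)

lemma ca_beta12_2: "act_word G beta12 [s1, s2 \<otimes> s1 \<otimes> inv s2, s2, s2] = map (\<lambda>x. (c \<otimes> s1 \<otimes> c \<otimes> s1) \<otimes> x \<otimes> inv (c \<otimes> s1 \<otimes> c \<otimes> s1)) [s1, s2 \<otimes> s1 \<otimes> inv s2, s2, s2]"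
  by (simp add: cs)

lemma ca_beta13_1: "act_word G beta13 [s1, s1, s2, s1 \<otimes> s2 \<otimes> inv s1] = map (\<lambda>x. (s1 \<otimes> c \<otimes> s1) \<otimes> x \<otimes> inv (s1 \<otimes> c \<otimes> s1)) [s1, s2 \<otimes> s1 \<otimes> inv s2, s2, s2]"
  by (simp add: cs)

lemma ca_beta13_2: "act_word G beta13 [s1, s2 \<otimes> s1 \<otimes> inv s2, s2, s2] = map (\<lambda>x. (inv s1 \<otimes> c \<otimes> inv s1) \<otimes> x \<otimes> inv (inv s1 \<otimes> c \<otimes> inv s1)) [s1, s1, s2, s1 \<otimes> s2 \<otimes> inv s1]"
  by (simp add: cs)

lemma ca_beta14_1: "act_word G beta14 [s1, s1, s2, s1 \<otimes> s2 \<otimes> inv s1] = map (\<lambda>x. (c \<otimes> s1) \<otimes> x \<otimes> inv (c \<otimes> s1)) [s1, s2 \<otimes> s1 \<otimes> inv s2, s2, s2]"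
  by (simp add: cs)

lemma ca_beta14_2: "act_word G beta14 [s1, s2 \<otimes> s1 \<otimes> inv s2, s2, s2] = map (\<lambda>x. (inv s1 \<otimes> c) \<otimes> x \<otimes> inv (inv s1 \<otimes> c)) [s1, s1, s2, s1 \<otimes> s2 \<otimes> inv s1]"
  by (simp add: cs)

lemma ca_beta23_1: "act_word G beta23 [s1, s1, s2, s1 \<otimes> s2 \<otimes> inv s1] = map (\<lambda>x. (s1) \<otimes> x \<otimes> inv (s1)) [s1, s2 \<otimes> s1 \<otimes> inv s2, s2, s2]"
  by (simp add: cs)

lemma ca_beta23_2: "act_word G beta23 [s1, s2 \<otimes> s1 \<otimes> inv s2, s2, s2] = map (\<lambda>x. (inv s1) \<otimes> x \<otimes> inv (inv s1)) [s1, s1, s2, s1 \<otimes> s2 \<otimes> inv s1]"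
  by (simp add: cs)

lemma ca_beta24_1: "act_word G beta24 [s1, s1, s2, s1 \<otimes> s2 \<otimes> inv s1] = map (\<lambda>x. \<one> \<otimes> x \<otimes> inv \<one>) [s1, s2 \<otimes> s1 \<otimes> inv s2, s2, s2]"
  by (simp add: cs)

lemma ca_beta24_2: "act_word G beta24 [s1, s2 \<otimes> s1 \<otimes> inv s2, s2, s2] = map (\<lambda>x. \<one> \<otimes> x \<otimes> inv \<one>) [s1, s1, s2, s1 \<otimes> s2 \<otimes> inv s1]"
  by (simp add: cs)

lemma ca_beta34_1: "act_word G beta34 [s1, s1, s2, s1 \<otimes> s2 \<otimes> inv s1] = map (\<lambda>x. (inv s1 \<otimes> inv s1) \<otimes> x \<otimes> inv (inv s1 \<otimes> inv s1)) [s1, s1, s2, s1 \<otimes> s2 \<otimes> inv s1]"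
  by (simp add: cs)

lemma ca_beta34_2: "act_word G beta34 [s1, s2 \<otimes> s1 \<otimes> inv s2, s2, s2] = map (\<lambda>x. \<one> \<otimes> x \<otimes> inv \<one>) [s1, s2 \<otimes> s1 \<otimes> inv s2, s2, s2]"
  by (simp add: cs)

lemma cb_beta12_1: "act_word G beta12 [s1, s2, s1, s2] = map (\<lambda>x. (c) \<otimes> x \<otimes> inv (c)) [s1, s2, inv s2 \<otimes> s1 \<otimes> s2, s1 \<otimes> s2 \<otimes> inv s1]"
  by (simp add: cs)

lemma cb_beta12_2: "act_word G beta12 [s1, s2, inv s2 \<otimes> s1 \<otimes> s2, s1 \<otimes> s2 \<otimes> inv s1] = map (\<lambda>x. (c) \<otimes> x \<otimes> inv (c)) [s1, s2, s1, s2]"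
  by (simp add: cs)

lemma cb_beta13_1: "act_word G beta13 [s1, s2, s1, s2] = map (\<lambda>x. (c \<otimes> s1 \<otimes> c \<otimes> s1) \<otimes> x \<otimes> inv (c \<otimes> s1 \<otimes> c \<otimes> s1)) [s1, s2, s1, s2]"
  by (simp add: cs)

lemma cb_beta13_2: "act_word G beta13 [s1, s2, inv s2 \<otimes> s1 \<otimes> s2, s1 \<otimes> s2 \<otimes> inv s1] = map (\<lambda>x. \<one> \<otimes> x \<otimes> inv \<one>) [s1, s2, inv s2 \<otimes> s1 \<otimes> s2, s1 \<otimes> s2 \<otimes> inv s1]"
  by (simp add: cs)

lemma cb_beta14_1: "act_word G beta14 [s1, s2, s1, s2] = map (\<lambda>x. (inv s1 \<otimes> c) \<otimes> x \<otimes> inv (inv s1 \<otimes> c)) [s1, s2, inv s2 \<otimes> s1 \<otimes> s2, s1 \<otimes> s2 \<otimes> inv s1]"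
  by (simp add: cs)

lemma cb_beta14_2: "act_word G beta14 [s1, s2, inv s2 \<otimes> s1 \<otimes> s2, s1 \<otimes> s2 \<otimes> inv s1] = map (\<lambda>x. (c \<otimes> s1) \<otimes> x \<otimes> inv (c \<otimes> s1)) [s1, s2, s1, s2]"
  by (simp add: cs)

lemma cb_beta23_1: "act_word G beta23 [s1, s2, s1, s2] = map (\<lambda>x. (inv s1) \<otimes> x \<otimes> inv (inv s1)) [s1, s2, inv s2 \<otimes> s1 \<otimes> s2, s1 \<otimes> s2 \<otimes> inv s1]"
  by (simp add: cs)

lemma cb_beta23_2: "act_word G beta23 [s1, s2, inv s2 \<otimes> s1 \<otimes> s2, s1 \<otimes> s2 \<otimes> inv s1] = map (\<lambda>x. (s1) \<otimes> x \<otimes> inv (s1)) [s1, s2, s1, s2]"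
  by (simp add: cs)

lemma cb_beta24_1: "act_word G beta24 [s1, s2, s1, s2] = map (\<lambda>x. (inv s1 \<otimes> inv s1) \<otimes> x \<otimes> inv (inv s1 \<otimes> inv s1)) [s1, s2, s1, s2]"
  by (simp add: cs)

lemma cb_beta24_2: "act_word G beta24 [s1, s2, inv s2 \<otimes> s1 \<otimes> s2, s1 \<otimes> s2 \<otimes> inv s1] = map (\<lambda>x. \<one> \<otimes> x \<otimes> inv \<one>) [s1, s2, inv s2 \<otimes> s1 \<otimes> s2, s1 \<otimes> s2 \<otimes> inv s1]"
  by (simp add: cs)

lemma cb_beta34_1: "act_word G beta34 [s1, s2, s1, s2] = map (\<lambda>x. \<one> \<otimes> x \<otimes> inv \<one>) [s1, s2, inv s2 \<otimes> s1 \<otimes> s2, s1 \<otimes> s2 \<otimes> inv s1]"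
  by (simp add: cs)

lemma cb_beta34_2: "act_word G beta34 [s1, s2, inv s2 \<otimes> s1 \<otimes> s2, s1 \<otimes> s2 \<otimes> inv s1] = map (\<lambda>x. \<one> \<otimes> x \<otimes> inv \<one>) [s1, s2, s1, s2]"
  by (simp add: cs)

lemma cc_beta12_1: "act_word G beta12 [s1, s2, s2, inv s2 \<otimes> s1 \<otimes> s2] = map (\<lambda>x. (c) \<otimes> x \<otimes> inv (c)) [s1, s2, s1 \<otimes> s2 \<otimes> inv s1, s1]"
  by (simp add: cs)

lemma cc_beta12_2: "act_word G beta12 [s1, s2, s1 \<otimes> s2 \<otimes> inv s1, s1] = map (\<lambda>x. (c) \<otimes> x \<otimes> inv (c)) [s1, s2, s2, inv s2 \<otimes> s1 \<otimes> s2]"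
  by (simp add: cs)

lemma cc_beta13_1: "act_word G beta13 [s1, s2, s2, inv s2 \<otimes> s1 \<otimes> s2] = map (\<lambda>x. (c \<otimes> s1) \<otimes> x \<otimes> inv (c \<otimes> s1)) [s1, s2, s1 \<otimes> s2 \<otimes> inv s1, s1]"
  by (simp add: cs)

lemma cc_beta13_2: "act_word G beta13 [s1, s2, s1 \<otimes> s2 \<otimes> inv s1, s1] = map (\<lambda>x. (inv s1 \<otimes> c) \<otimes> x \<otimes> inv (inv s1 \<otimes> c)) [s1, s2, s2, inv s2 \<otimes> s1 \<otimes> s2]"
  by (simp add: cs)

lemma cc_beta14_1: "act_word G beta14 [s1, s2, s2, inv s2 \<otimes> s1 \<otimes> s2] = map (\<lambda>x. (c \<otimes> s1 \<otimes> c \<otimes> s1) \<otimes> x \<otimes> inv (c \<otimes> s1 \<otimes> c \<otimes> s1)) [s1, s2, s2, inv s2 \<otimes> s1 \<otimes> s2]"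
  by (simp add: cs)

lemma cc_beta14_2: "act_word G beta14 [s1, s2, s1 \<otimes> s2 \<otimes> inv s1, s1] = map (\<lambda>x. \<one> \<otimes> x \<otimes> inv \<one>) [s1, s2, s1 \<otimes> s2 \<otimes> inv s1, s1]"
  by (simp add: cs)

lemma cc_beta23_1: "act_word G beta23 [s1, s2, s2, inv s2 \<otimes> s1 \<otimes> s2] = map (\<lambda>x. \<one> \<otimes> x \<otimes> inv \<one>) [s1, s2, s2, inv s2 \<otimes> s1 \<otimes> s2]"
  by (simp add: cs)

lemma cc_beta23_2: "act_word G beta23 [s1, s2, s1 \<otimes> s2 \<otimes> inv s1, s1] = map (\<lambda>x. (inv s1 \<otimes> inv s1) \<otimes> x \<otimes> inv (inv s1 \<otimes> inv s1)) [s1, s2, s1 \<otimes> s2 \<otimes> inv s1, s1]"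
  by (simp add: cs)

lemma cc_beta24_1: "act_word G beta24 [s1, s2, s2, inv s2 \<otimes> s1 \<otimes> s2] = map (\<lambda>x. (inv s1) \<otimes> x \<otimes> inv (inv s1)) [s1, s2, s1 \<otimes> s2 \<otimes> inv s1, s1]"
  by (simp add: cs)

lemma cc_beta24_2: "act_word G beta24 [s1, s2, s1 \<otimes> s2 \<otimes> inv s1, s1] = map (\<lambda>x. (s1) \<otimes> x \<otimes> inv (s1)) [s1, s2, s2, inv s2 \<otimes> s1 \<otimes> s2]"
  by (simp add: cs)

lemma cc_beta34_1: "act_word G beta34 [s1, s2, s2, inv s2 \<otimes> s1 \<otimes> s2] = map (\<lambda>x. \<one> \<otimes> x \<otimes> inv \<one>) [s1, s2, s1 \<otimes> s2 \<otimes> inv s1, s1]"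
  by (simp add: cs)

lemma cc_beta34_2: "act_word G beta34 [s1, s2, s1 \<otimes> s2 \<otimes> inv s1, s1] = map (\<lambda>x. \<one> \<otimes> x \<otimes> inv \<one>) [s1, s2, s2, inv s2 \<otimes> s1 \<otimes> s2]"
  by (simp add: cs)

end


lemma nc_fix: "x \<noteq> y \<Longrightarrow> f x = x \<Longrightarrow> f y = y \<Longrightarrow> ncycles f {x,y} = 2"
proof -
  assume xy: "x \<noteq> y" and fx: "f x = x" and fy: "f y = y"
  have px: "(f ^^ n) x = x" for n by (induction n) (auto simp: fx)
  have py: "(f ^^ n) y = y" for n by (induction n) (auto simp: fy)
  have sx: "{(f ^^ n) x | n. True} = {x}" using px by auto
  have sy: "{(f ^^ n) y | n. True} = {y}" using py by auto
  have "{{(f ^^ n) z | n. True} | z. z \<in> {x,y}} = {{(f ^^ n) x | n. True}, {(f ^^ n) y | n. True}}"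
    by blast
  then have "{{(f ^^ n) z | n. True} | z. z \<in> {x,y}} = {{x},{y}}" using sx sy by simp
  then show ?thesis unfolding ncycles_def using xy by simp
qed

lemma nc_swap: "f x = y \<Longrightarrow> f y = x \<Longrightarrow> ncycles f {x,y} = 1"
proof -
  assume fx: "f x = y" and fy: "f y = x"
  have p: "(f ^^ n) x = (if even n then x else y) \<and> (f ^^ n) y = (if even n then y else x)" for n
    by (induction n) (auto simp: fx fy)
  have ox: "{(f ^^ n) x | n. True} = {x,y}"
  proof
    show "{(f ^^ n) x | n. True} \<subseteq> {x,y}" using p by auto
    have "x = (f ^^ 0) x" "y = (f ^^ 1) x" using fx by auto
    then show "{x,y} \<subseteq> {(f ^^ n) x | n. True}" by blast
  qed
  have oy: "{(f ^^ n) y | n. True} = {x,y}"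
  proof
    show "{(f ^^ n) y | n. True} \<subseteq> {x,y}" using p by auto
    have "y = (f ^^ 0) y" "x = (f ^^ 1) y" using fy by auto
    then show "{x,y} \<subseteq> {(f ^^ n) y | n. True}" by blast
  qed
  have "{{(f ^^ n) z | n. True} | z. z \<in> {x,y}} = {{(f ^^ n) x | n. True}, {(f ^^ n) y | n. True}}"
    by blast
  then have "{{(f ^^ n) z | n. True} | z. z \<in> {x,y}} = {{x,y}}" using ox oy by simp
  then show ?thesis unfolding ncycles_def by simp
qed

context group begin

lemma cact_eq: "wv w \<Longrightarrow> tv t \<Longrightarrow> tv t' \<Longrightarrow> g \<in> carrier G \<Longrightarrow>
   act_word G w t = map (\<lambda>x. g \<otimes> x \<otimes> inv g) t' \<Longrightarrow> cact G w (tclass G t) = tclass G t'"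
  by (simp add: cact_tclass tclass_conj)

lemma wv_betas: "wv beta12" "wv beta13" "wv beta14" "wv beta23" "wv beta24" "wv beta34"
  by (auto intro: wv_gens simp: pure_gens_def)

lemma Nil_pure: "[] \<in> pure_words"
  unfolding pure_words_def by (rule CollectI, rule exI[of _ "[]"]) simp

lemma gen_pure: "w \<in> pure_gens \<Longrightarrow> w \<in> pure_words"
  unfolding pure_words_def by (rule CollectI, rule exI[of _ "[w]"]) simp

lemma orbit_result:
  assumes t1: "tv t1" and t2: "tv t2" and e: "e = tclass G t1" and f: "f = tclass G t2"
    and ef: "e \<noteq> f" and sw: "\<And>w. w \<in> pure_gens \<Longrightarrow> sw w e f"
    and w0: "w0 \<in> pure_gens" and w0e: "cact G w0 e = f"
  shows "B4_orbit G e = {e,f} \<and> card {e,f} = 2 \<and> card (rho4_image G {e,f}) = 2"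
proof -
  have eT: "e \<subseteq> Collect tv" and fT: "f \<subseteq> Collect tv" using tclass_tv t1 t2 e f by auto
  have SW: "sw w e f" if "w \<in> pure_words" for w using sw_pure[OF eT fT sw that] .
  have w0f: "cact G w0 f = e" using SW[OF gen_pure[OF w0]] w0e ef unfolding sw_def by auto
  have orb: "B4_orbit G e = {e,f}"
  proof
    show "B4_orbit G e \<subseteq> {e,f}" unfolding B4_orbit_def using SW unfolding sw_def by auto
    have "e = cact G [] e" by (simp add: cact_Nil)
    then have "e \<in> B4_orbit G e" unfolding B4_orbit_def using Nil_pure by blast
    moreover have "f \<in> B4_orbit G e" unfolding B4_orbit_def using gen_pure[OF w0] w0e by force
    ultimately show "{e,f} \<subseteq> B4_orbit G e" by blast
  qed
  define Z where "Z = {e,f}"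
  define r1 where "r1 = restrict (\<lambda>A. A) Z"
  define r2 where "r2 = restrict (\<lambda>A. if A = e then f else e) Z"
  have img: "rho4_image G Z = {r1, r2}"
  proof
    show "rho4_image G Z \<subseteq> {r1, r2}"
    proof
      fix r assume "r \<in> rho4_image G Z"
      then obtain w where w: "w \<in> pure_words" "r = rho4 G Z w" unfolding rho4_image_def by blast
      from SW[OF w(1)] show "r \<in> {r1, r2}" unfolding sw_def
      proof
        assume h: "cact G w e = e \<and> cact G w f = f"
        have "r = r1" unfolding w(2) rho4_def r1_def Z_def
          by (rule ext) (auto simp: restrict_def h)
        then show ?thesis by simp
      next
        assume h: "cact G w e = f \<and> cact G w f = e"
        have "r = r2" unfolding w(2) rho4_def r2_def Z_def
          by (rule ext) (auto simp: restrict_def h)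
        then show ?thesis by simp
      qed
    qed
    have "rho4 G Z [] = r1" unfolding rho4_def r1_def Z_def
      by (rule ext) (auto simp: restrict_def cact_Nil)
    moreover have "rho4 G Z w0 = r2" unfolding rho4_def r2_def Z_def
      by (rule ext) (auto simp: restrict_def w0e w0f)
    ultimately show "{r1, r2} \<subseteq> rho4_image G Z" unfolding rho4_image_def
      using Nil_pure gen_pure[OF w0] by blast
  qed
  have "r1 e \<noteq> r2 e" unfolding r1_def r2_def Z_def using ef by simp
  then have "r1 \<noteq> r2" by metis
  then have "card (rho4_image G Z) = 2" using img by simp
  then show ?thesis using orb ef Z_def by simp
qed

lemma conj_fix: "x \<in> carrier G \<Longrightarrow> g \<in> carrier G \<Longrightarrow> x = g \<otimes> x \<otimes> inv g \<Longrightarrow> g \<otimes> x = x \<otimes> g"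
  by (metis inv_solve_right' m_closed)

lemma comm_inv: "x \<in> carrier G \<Longrightarrow> y \<in> carrier G \<Longrightarrow> inv y \<otimes> x = x \<otimes> inv y \<Longrightarrow> x \<otimes> y = y \<otimes> x"
  by (metis inv_comm inv_solve_left' m_assoc m_closed inv_closed r_inv r_one l_inv l_one)

lemma centralI:
  assumes gen: "generate G {a,b} = carrier G" and a: "a \<in> carrier G" and b: "b \<in> carrier G"
    and g: "g \<in> carrier G" and ga: "g \<otimes> a = a \<otimes> g" and gb: "g \<otimes> b = b \<otimes> g"
  shows "g \<in> grp_center G"
proof -
  define H where "H = {h \<in> carrier G. g \<otimes> h = h \<otimes> g}"
  have "subgroup H G"
  proof (rule subgroupI)
    show "H \<subseteq> carrier G" unfolding H_def by auto
    show "H \<noteq> {}" unfolding H_def using g by auto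
  next
    fix h assume "h \<in> H"
    then have h: "h \<in> carrier G" "g \<otimes> h = h \<otimes> g" unfolding H_def by auto
    have "g \<otimes> inv h = inv h \<otimes> (h \<otimes> g) \<otimes> inv h" using h(1) g by (simp add: m_assoc[symmetric])
    also have "\<dots> = inv h \<otimes> (g \<otimes> h) \<otimes> inv h" using h(2) by simp
    also have "\<dots> = inv h \<otimes> g" using h(1) g by (simp add: m_assoc)
    finally have "g \<otimes> inv h = inv h \<otimes> g" .
    then show "inv h \<in> H" unfolding H_def using h by simp
  next
    fix h k assume "h \<in> H" "k \<in> H"
    then have h: "h \<in> carrier G" "g \<otimes> h = h \<otimes> g" and k: "k \<in> carrier G" "g \<otimes> k = k \<otimes> g"
      unfolding H_def by auto
    have "g \<otimes> (h \<otimes> k) = (g \<otimes> h) \<otimes> k" using h(1) k(1) g by (simp add: m_assoc)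
    also have "\<dots> = (h \<otimes> g) \<otimes> k" using h(2) by simp
    also have "\<dots> = h \<otimes> (g \<otimes> k)" using h(1) k(1) g by (simp add: m_assoc)
    also have "\<dots> = h \<otimes> (k \<otimes> g)" using k(2) by simp
    also have "\<dots> = (h \<otimes> k) \<otimes> g" using h(1) k(1) g by (simp add: m_assoc)
    finally show "h \<otimes> k \<in> H" unfolding H_def using h k by simp
  qed
  moreover have "{a,b} \<subseteq> H" unfolding H_def using a b ga gb by auto
  ultimately have "carrier G \<subseteq> H" using generate_subgroup_incl gen by metis
  then show ?thesis unfolding grp_center_def H_def using g by auto
qed

lemma conj_class_self: "x \<in> carrier G \<Longrightarrow> x \<in> conj_class G x"
  unfolding conj_class_def by (rule CollectI, rule exI[of _ "\<one>"]) simp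

lemma conj_class_l: "x \<in> carrier G \<Longrightarrow> y \<in> carrier G \<Longrightarrow> y \<otimes> x \<otimes> inv y \<in> conj_class G x"
  unfolding conj_class_def by blast

lemma conj_class_r: "x \<in> carrier G \<Longrightarrow> y \<in> carrier G \<Longrightarrow> inv y \<otimes> x \<otimes> y \<in> conj_class G x"
  unfolding conj_class_def by (rule CollectI, rule exI[of _ "inv y"]) simp

end


context thm_ctx begin
lemma s2c: "s2 \<in> carrier G" using s1 c s2 by simp
lemma da_beta12_1: "cact G beta12 (tclass G [s1, s1, s2, s1 \<otimes> s2 \<otimes> inv s1]) = tclass G [s1, s1, s2, s1 \<otimes> s2 \<otimes> inv s1]"
  by (rule cact_eq[OF wv_betas(1) _ _ _ ca_beta12_1]) (simp_all add: tv_def s1 c s2c)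

lemma da_beta12_2: "cact G beta12 (tclass G [s1, s2 \<otimes> s1 \<otimes> inv s2, s2, s2]) = tclass G [s1, s2 \<otimes> s1 \<otimes> inv s2, s2, s2]"
  by (rule cact_eq[OF wv_betas(1) _ _ _ ca_beta12_2]) (simp_all add: tv_def s1 c s2c)

lemma da_beta13_1: "cact G beta13 (tclass G [s1, s1, s2, s1 \<otimes> s2 \<otimes> inv s1]) = tclass G [s1, s2 \<otimes> s1 \<otimes> inv s2, s2, s2]"
  by (rule cact_eq[OF wv_betas(2) _ _ _ ca_beta13_1]) (simp_all add: tv_def s1 c s2c)

lemma da_beta13_2: "cact G beta13 (tclass G [s1, s2 \<otimes> s1 \<otimes> inv s2, s2, s2]) = tclass G [s1, s1, s2, s1 \<otimes> s2 \<otimes> inv s1]"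
  by (rule cact_eq[OF wv_betas(2) _ _ _ ca_beta13_2]) (simp_all add: tv_def s1 c s2c)

lemma da_beta14_1: "cact G beta14 (tclass G [s1, s1, s2, s1 \<otimes> s2 \<otimes> inv s1]) = tclass G [s1, s2 \<otimes> s1 \<otimes> inv s2, s2, s2]"
  by (rule cact_eq[OF wv_betas(3) _ _ _ ca_beta14_1]) (simp_all add: tv_def s1 c s2c)

lemma da_beta14_2: "cact G beta14 (tclass G [s1, s2 \<otimes> s1 \<otimes> inv s2, s2, s2]) = tclass G [s1, s1, s2, s1 \<otimes> s2 \<otimes> inv s1]"
  by (rule cact_eq[OF wv_betas(3) _ _ _ ca_beta14_2]) (simp_all add: tv_def s1 c s2c)

lemma da_beta23_1: "cact G beta23 (tclass G [s1, s1, s2, s1 \<otimes> s2 \<otimes> inv s1]) = tclass G [s1, s2 \<otimes> s1 \<otimes> inv s2, s2, s2]"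
  by (rule cact_eq[OF wv_betas(4) _ _ _ ca_beta23_1]) (simp_all add: tv_def s1 c s2c)

lemma da_beta23_2: "cact G beta23 (tclass G [s1, s2 \<otimes> s1 \<otimes> inv s2, s2, s2]) = tclass G [s1, s1, s2, s1 \<otimes> s2 \<otimes> inv s1]"
  by (rule cact_eq[OF wv_betas(4) _ _ _ ca_beta23_2]) (simp_all add: tv_def s1 c s2c)

lemma da_beta24_1: "cact G beta24 (tclass G [s1, s1, s2, s1 \<otimes> s2 \<otimes> inv s1]) = tclass G [s1, s2 \<otimes> s1 \<otimes> inv s2, s2, s2]"
  by (rule cact_eq[OF wv_betas(5) _ _ _ ca_beta24_1]) (simp_all add: tv_def s1 c s2c)

lemma da_beta24_2: "cact G beta24 (tclass G [s1, s2 \<otimes> s1 \<otimes> inv s2, s2, s2]) = tclass G [s1, s1, s2, s1 \<otimes> s2 \<otimes> inv s1]"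
  by (rule cact_eq[OF wv_betas(5) _ _ _ ca_beta24_2]) (simp_all add: tv_def s1 c s2c)

lemma da_beta34_1: "cact G beta34 (tclass G [s1, s1, s2, s1 \<otimes> s2 \<otimes> inv s1]) = tclass G [s1, s1, s2, s1 \<otimes> s2 \<otimes> inv s1]"
  by (rule cact_eq[OF wv_betas(6) _ _ _ ca_beta34_1]) (simp_all add: tv_def s1 c s2c)

lemma da_beta34_2: "cact G beta34 (tclass G [s1, s2 \<otimes> s1 \<otimes> inv s2, s2, s2]) = tclass G [s1, s2 \<otimes> s1 \<otimes> inv s2, s2, s2]"
  by (rule cact_eq[OF wv_betas(6) _ _ _ ca_beta34_2]) (simp_all add: tv_def s1 c s2c)

lemma db_beta12_1: "cact G beta12 (tclass G [s1, s2, s1, s2]) = tclass G [s1, s2, inv s2 \<otimes> s1 \<otimes> s2, s1 \<otimes> s2 \<otimes> inv s1]"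
  by (rule cact_eq[OF wv_betas(1) _ _ _ cb_beta12_1]) (simp_all add: tv_def s1 c s2c)

lemma db_beta12_2: "cact G beta12 (tclass G [s1, s2, inv s2 \<otimes> s1 \<otimes> s2, s1 \<otimes> s2 \<otimes> inv s1]) = tclass G [s1, s2, s1, s2]"
  by (rule cact_eq[OF wv_betas(1) _ _ _ cb_beta12_2]) (simp_all add: tv_def s1 c s2c)

lemma db_beta13_1: "cact G beta13 (tclass G [s1, s2, s1, s2]) = tclass G [s1, s2, s1, s2]"
  by (rule cact_eq[OF wv_betas(2) _ _ _ cb_beta13_1]) (simp_all add: tv_def s1 c s2c)

lemma db_beta13_2: "cact G beta13 (tclass G [s1, s2, inv s2 \<otimes> s1 \<otimes> s2, s1 \<otimes> s2 \<otimes> inv s1]) = tclass G [s1, s2, inv s2 \<otimes> s1 \<otimes> s2, s1 \<otimes> s2 \<otimes> inv s1]"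
  by (rule cact_eq[OF wv_betas(2) _ _ _ cb_beta13_2]) (simp_all add: tv_def s1 c s2c)

lemma db_beta14_1: "cact G beta14 (tclass G [s1, s2, s1, s2]) = tclass G [s1, s2, inv s2 \<otimes> s1 \<otimes> s2, s1 \<otimes> s2 \<otimes> inv s1]"
  by (rule cact_eq[OF wv_betas(3) _ _ _ cb_beta14_1]) (simp_all add: tv_def s1 c s2c)

lemma db_beta14_2: "cact G beta14 (tclass G [s1, s2, inv s2 \<otimes> s1 \<otimes> s2, s1 \<otimes> s2 \<otimes> inv s1]) = tclass G [s1, s2, s1, s2]"
  by (rule cact_eq[OF wv_betas(3) _ _ _ cb_beta14_2]) (simp_all add: tv_def s1 c s2c)

lemma db_beta23_1: "cact G beta23 (tclass G [s1, s2, s1, s2]) = tclass G [s1, s2, inv s2 \<otimes> s1 \<otimes> s2, s1 \<otimes> s2 \<otimes> inv s1]"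
  by (rule cact_eq[OF wv_betas(4) _ _ _ cb_beta23_1]) (simp_all add: tv_def s1 c s2c)

lemma db_beta23_2: "cact G beta23 (tclass G [s1, s2, inv s2 \<otimes> s1 \<otimes> s2, s1 \<otimes> s2 \<otimes> inv s1]) = tclass G [s1, s2, s1, s2]"
  by (rule cact_eq[OF wv_betas(4) _ _ _ cb_beta23_2]) (simp_all add: tv_def s1 c s2c)

lemma db_beta24_1: "cact G beta24 (tclass G [s1, s2, s1, s2]) = tclass G [s1, s2, s1, s2]"
  by (rule cact_eq[OF wv_betas(5) _ _ _ cb_beta24_1]) (simp_all add: tv_def s1 c s2c)

lemma db_beta24_2: "cact G beta24 (tclass G [s1, s2, inv s2 \<otimes> s1 \<otimes> s2, s1 \<otimes> s2 \<otimes> inv s1]) = tclass G [s1, s2, inv s2 \<otimes> s1 \<otimes> s2, s1 \<otimes> s2 \<otimes> inv s1]"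
  by (rule cact_eq[OF wv_betas(5) _ _ _ cb_beta24_2]) (simp_all add: tv_def s1 c s2c)

lemma db_beta34_1: "cact G beta34 (tclass G [s1, s2, s1, s2]) = tclass G [s1, s2, inv s2 \<otimes> s1 \<otimes> s2, s1 \<otimes> s2 \<otimes> inv s1]"
  by (rule cact_eq[OF wv_betas(6) _ _ _ cb_beta34_1]) (simp_all add: tv_def s1 c s2c)

lemma db_beta34_2: "cact G beta34 (tclass G [s1, s2, inv s2 \<otimes> s1 \<otimes> s2, s1 \<otimes> s2 \<otimes> inv s1]) = tclass G [s1, s2, s1, s2]"
  by (rule cact_eq[OF wv_betas(6) _ _ _ cb_beta34_2]) (simp_all add: tv_def s1 c s2c)

lemma dc_beta12_1: "cact G beta12 (tclass G [s1, s2, s2, inv s2 \<otimes> s1 \<otimes> s2]) = tclass G [s1, s2, s1 \<otimes> s2 \<otimes> inv s1, s1]"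
  by (rule cact_eq[OF wv_betas(1) _ _ _ cc_beta12_1]) (simp_all add: tv_def s1 c s2c)

lemma dc_beta12_2: "cact G beta12 (tclass G [s1, s2, s1 \<otimes> s2 \<otimes> inv s1, s1]) = tclass G [s1, s2, s2, inv s2 \<otimes> s1 \<otimes> s2]"
  by (rule cact_eq[OF wv_betas(1) _ _ _ cc_beta12_2]) (simp_all add: tv_def s1 c s2c)

lemma dc_beta13_1: "cact G beta13 (tclass G [s1, s2, s2, inv s2 \<otimes> s1 \<otimes> s2]) = tclass G [s1, s2, s1 \<otimes> s2 \<otimes> inv s1, s1]"
  by (rule cact_eq[OF wv_betas(2) _ _ _ cc_beta13_1]) (simp_all add: tv_def s1 c s2c)

lemma dc_beta13_2: "cact G beta13 (tclass G [s1, s2, s1 \<otimes> s2 \<otimes> inv s1, s1]) = tclass G [s1, s2, s2, inv s2 \<otimes> s1 \<otimes> s2]"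
  by (rule cact_eq[OF wv_betas(2) _ _ _ cc_beta13_2]) (simp_all add: tv_def s1 c s2c)

lemma dc_beta14_1: "cact G beta14 (tclass G [s1, s2, s2, inv s2 \<otimes> s1 \<otimes> s2]) = tclass G [s1, s2, s2, inv s2 \<otimes> s1 \<otimes> s2]"
  by (rule cact_eq[OF wv_betas(3) _ _ _ cc_beta14_1]) (simp_all add: tv_def s1 c s2c)

lemma dc_beta14_2: "cact G beta14 (tclass G [s1, s2, s1 \<otimes> s2 \<otimes> inv s1, s1]) = tclass G [s1, s2, s1 \<otimes> s2 \<otimes> inv s1, s1]"
  by (rule cact_eq[OF wv_betas(3) _ _ _ cc_beta14_2]) (simp_all add: tv_def s1 c s2c)

lemma dc_beta23_1: "cact G beta23 (tclass G [s1, s2, s2, inv s2 \<otimes> s1 \<otimes> s2]) = tclass G [s1, s2, s2, inv s2 \<otimes> s1 \<otimes> s2]"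
  by (rule cact_eq[OF wv_betas(4) _ _ _ cc_beta23_1]) (simp_all add: tv_def s1 c s2c)

lemma dc_beta23_2: "cact G beta23 (tclass G [s1, s2, s1 \<otimes> s2 \<otimes> inv s1, s1]) = tclass G [s1, s2, s1 \<otimes> s2 \<otimes> inv s1, s1]"
  by (rule cact_eq[OF wv_betas(4) _ _ _ cc_beta23_2]) (simp_all add: tv_def s1 c s2c)

lemma dc_beta24_1: "cact G beta24 (tclass G [s1, s2, s2, inv s2 \<otimes> s1 \<otimes> s2]) = tclass G [s1, s2, s1 \<otimes> s2 \<otimes> inv s1, s1]"
  by (rule cact_eq[OF wv_betas(5) _ _ _ cc_beta24_1]) (simp_all add: tv_def s1 c s2c)

lemma dc_beta24_2: "cact G beta24 (tclass G [s1, s2, s1 \<otimes> s2 \<otimes> inv s1, s1]) = tclass G [s1, s2, s2, inv s2 \<otimes> s1 \<otimes> s2]"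
  by (rule cact_eq[OF wv_betas(5) _ _ _ cc_beta24_2]) (simp_all add: tv_def s1 c s2c)

lemma dc_beta34_1: "cact G beta34 (tclass G [s1, s2, s2, inv s2 \<otimes> s1 \<otimes> s2]) = tclass G [s1, s2, s1 \<otimes> s2 \<otimes> inv s1, s1]"
  by (rule cact_eq[OF wv_betas(6) _ _ _ cc_beta34_1]) (simp_all add: tv_def s1 c s2c)

lemma dc_beta34_2: "cact G beta34 (tclass G [s1, s2, s1 \<otimes> s2 \<otimes> inv s1, s1]) = tclass G [s1, s2, s2, inv s2 \<otimes> s1 \<otimes> s2]"
  by (rule cact_eq[OF wv_betas(6) _ _ _ cc_beta34_2]) (simp_all add: tv_def s1 c s2c)

end

locale thm_ctx2 = thm_ctx +
  assumes gen: "generate G {s1, s2} = carrier G"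
    and center: "grp_center G = {\<one>}"
    and nontriv: "carrier G \<noteq> {\<one>}"
begin

lemma noncomm: "s1 \<otimes> s2 \<noteq> s2 \<otimes> s1"
proof
  assume eq: "s1 \<otimes> s2 = s2 \<otimes> s1"
  have "s1 \<in> grp_center G" by (rule centralI[OF gen s1 s2c s1]) (simp_all add: eq)
  moreover have "s2 \<in> grp_center G" by (rule centralI[OF gen s1 s2c s2c]) (simp_all add: eq)
  ultimately have "{s1, s2} \<subseteq> {\<one>}" using center by auto
  then have "carrier G \<subseteq> {\<one>}" using generate_subgroup_incl[OF _ triv_subgroup] gen by metis
  then show False using nontriv one_closed by blast
qed

lemma g_one: "g \<in> carrier G \<Longrightarrow> s1 = g \<otimes> s1 \<otimes> inv g \<Longrightarrow> s2 = g \<otimes> s2 \<otimes> inv g \<Longrightarrow> g = \<one>"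
proof -
  assume g: "g \<in> carrier G" and h1: "s1 = g \<otimes> s1 \<otimes> inv g" and h2: "s2 = g \<otimes> s2 \<otimes> inv g"
  have "g \<in> grp_center G"
    by (rule centralI[OF gen s1 s2c g conj_fix[OF s1 g h1] conj_fix[OF s2c g h2]])
  then show ?thesis using center by auto
qed

lemma sig: "length t = 4 \<Longrightarrow> set t \<subseteq> carrier G \<Longrightarrow> {s1,s2} \<subseteq> set t \<Longrightarrow>
  t!0 \<in> C1 \<Longrightarrow> t!1 \<in> C2 \<Longrightarrow> t!2 \<in> C3 \<Longrightarrow> t!3 \<in> C4 \<Longrightarrow>
  t!0 \<otimes> t!1 \<otimes> t!2 \<otimes> t!3 = \<one> \<Longrightarrow> tclass G t \<in> Sigma_i G C1 C2 C3 C4"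
proof -
  assume a: "length t = 4" "set t \<subseteq> carrier G" "{s1,s2} \<subseteq> set t"
    "t!0 \<in> C1" "t!1 \<in> C2" "t!2 \<in> C3" "t!3 \<in> C4" "t!0 \<otimes> t!1 \<otimes> t!2 \<otimes> t!3 = \<one>"
  have "generate G (set t) = carrier G"
    using mono_generate[OF a(3)] generate_incl[OF a(2)] gen by blast
  then show ?thesis unfolding Sigma_i_def using a by blast
qed

lemma prods:
  "s1 \<otimes> s1 \<otimes> s2 \<otimes> (s1 \<otimes> s2 \<otimes> inv s1) = \<one>"
  "s1 \<otimes> (s2 \<otimes> s1 \<otimes> inv s2) \<otimes> s2 \<otimes> s2 = \<one>"
  "s1 \<otimes> s2 \<otimes> s1 \<otimes> s2 = \<one>"
  "s1 \<otimes> s2 \<otimes> (inv s2 \<otimes> s1 \<otimes> s2) \<otimes> (s1 \<otimes> s2 \<otimes> inv s1) = \<one>"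
  "s1 \<otimes> s2 \<otimes> s2 \<otimes> (inv s2 \<otimes> s1 \<otimes> s2) = \<one>"
  "s1 \<otimes> s2 \<otimes> (s1 \<otimes> s2 \<otimes> inv s1) \<otimes> s1 = \<one>"
  by (simp_all add: cs)

lemma tvs: "tv [s1, s1, s2, s1 \<otimes> s2 \<otimes> inv s1]" "tv [s1, s2 \<otimes> s1 \<otimes> inv s2, s2, s2]" "tv [s1, s2, s1, s2]" "tv [s1, s2, inv s2 \<otimes> s1 \<otimes> s2, s1 \<otimes> s2 \<otimes> inv s1]" "tv [s1, s2, s2, inv s2 \<otimes> s1 \<otimes> s2]" "tv [s1, s2, s1 \<otimes> s2 \<otimes> inv s1, s1]"
  by (simp_all add: tv_def s1 s2c)

lemma nea: "tclass G [s1, s1, s2, s1 \<otimes> s2 \<otimes> inv s1] \<noteq> tclass G [s1, s2 \<otimes> s1 \<otimes> inv s2, s2, s2]"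
proof
  assume h: "tclass G [s1, s1, s2, s1 \<otimes> s2 \<otimes> inv s1] = tclass G [s1, s2 \<otimes> s1 \<otimes> inv s2, s2, s2]"
  from tclass_eqD[OF h tvs(1)] obtain g where g: "g \<in> carrier G" and eq: "[s1, s1, s2, s1 \<otimes> s2 \<otimes> inv s1] = map (\<lambda>x. g \<otimes> x \<otimes> inv g) [s1, s2 \<otimes> s1 \<otimes> inv s2, s2, s2]"
    by (rule bexE)
  note cc = eq[unfolded list.map list.inject]
  have e0: "s1 = g \<otimes> s1 \<otimes> inv g" and e1: "s1 = g \<otimes> (s2 \<otimes> s1 \<otimes> inv s2) \<otimes> inv g"
    and e2: "s2 = g \<otimes> s2 \<otimes> inv g"
    using cc[THEN conjunct1] cc[THEN conjunct2, THEN conjunct1] cc[THEN conjunct2, THEN conjunct2, THEN conjunct1] by - (assumption+)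
  have g1: "g = \<one>" using g_one[OF g e0 e2] .
  have "s1 = \<one> \<otimes> (s2 \<otimes> s1 \<otimes> inv s2) \<otimes> inv \<one>" using e1[unfolded g1] .
  also have "\<dots> = s2 \<otimes> s1 \<otimes> inv s2" using s1 s2c by simp
  finally have "s1 = s2 \<otimes> s1 \<otimes> inv s2" .
  then have "s2 \<otimes> s1 = s1 \<otimes> s2" by (rule conj_fix[OF s1 s2c])
  then show False using noncomm by simp
qed

lemma neb: "tclass G [s1, s2, s1, s2] \<noteq> tclass G [s1, s2, inv s2 \<otimes> s1 \<otimes> s2, s1 \<otimes> s2 \<otimes> inv s1]"
proof
  assume h: "tclass G [s1, s2, s1, s2] = tclass G [s1, s2, inv s2 \<otimes> s1 \<otimes> s2, s1 \<otimes> s2 \<otimes> inv s1]"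
  from tclass_eqD[OF h tvs(3)] obtain g where g: "g \<in> carrier G" and eq: "[s1, s2, s1, s2] = map (\<lambda>x. g \<otimes> x \<otimes> inv g) [s1, s2, inv s2 \<otimes> s1 \<otimes> s2, s1 \<otimes> s2 \<otimes> inv s1]"
    by (rule bexE)
  note cc = eq[unfolded list.map list.inject]
  have e0: "s1 = g \<otimes> s1 \<otimes> inv g" and e1: "s1 = g \<otimes> (inv s2 \<otimes> s1 \<otimes> s2) \<otimes> inv g"
    and e2: "s2 = g \<otimes> s2 \<otimes> inv g"
    using cc[THEN conjunct1] cc[THEN conjunct2, THEN conjunct2, THEN conjunct1] cc[THEN conjunct2, THEN conjunct1] by - (assumption+)
  have g1: "g = \<one>" using g_one[OF g e0 e2] .
  have "s1 = \<one> \<otimes> (inv s2 \<otimes> s1 \<otimes> s2) \<otimes> inv \<one>" using e1[unfolded g1] .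
  also have "\<dots> = inv s2 \<otimes> s1 \<otimes> inv (inv s2)" using s1 s2c by simp
  finally have "s1 = inv s2 \<otimes> s1 \<otimes> inv (inv s2)" .
  then have "inv s2 \<otimes> s1 = s1 \<otimes> inv s2" by (rule conj_fix[OF s1 inv_closed[OF s2c]])
  then have "s1 \<otimes> s2 = s2 \<otimes> s1" by (rule comm_inv[OF s1 s2c])
  then show False using noncomm by simp
qed

lemma nec: "tclass G [s1, s2, s2, inv s2 \<otimes> s1 \<otimes> s2] \<noteq> tclass G [s1, s2, s1 \<otimes> s2 \<otimes> inv s1, s1]"
proof
  assume h: "tclass G [s1, s2, s2, inv s2 \<otimes> s1 \<otimes> s2] = tclass G [s1, s2, s1 \<otimes> s2 \<otimes> inv s1, s1]"
  from tclass_eqD[OF h tvs(5)] obtain g where g: "g \<in> carrier G" and eq: "[s1, s2, s2, inv s2 \<otimes> s1 \<otimes> s2] = map (\<lambda>x. g \<otimes> x \<otimes> inv g) [s1, s2, s1 \<otimes> s2 \<otimes> inv s1, s1]"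
    by (rule bexE)
  note cc = eq[unfolded list.map list.inject]
  have e0: "s1 = g \<otimes> s1 \<otimes> inv g" and e1: "s2 = g \<otimes> (s1 \<otimes> s2 \<otimes> inv s1) \<otimes> inv g"
    and e2: "s2 = g \<otimes> s2 \<otimes> inv g"
    using cc[THEN conjunct1] cc[THEN conjunct2, THEN conjunct2, THEN conjunct1] cc[THEN conjunct2, THEN conjunct1] by - (assumption+)
  have g1: "g = \<one>" using g_one[OF g e0 e2] .
  have "s2 = \<one> \<otimes> (s1 \<otimes> s2 \<otimes> inv s1) \<otimes> inv \<one>" using e1[unfolded g1] .
  also have "\<dots> = s1 \<otimes> s2 \<otimes> inv s1" using s1 s2c by simp
  finally have "s2 = s1 \<otimes> s2 \<otimes> inv s1" .
  then have "s1 \<otimes> s2 = s2 \<otimes> s1" by (rule conj_fix[OF s2c s1])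
  then show False using noncomm by simp
qed

lemma swa: "w \<in> pure_gens \<Longrightarrow> sw w (tclass G [s1, s1, s2, s1 \<otimes> s2 \<otimes> inv s1]) (tclass G [s1, s2 \<otimes> s1 \<otimes> inv s2, s2, s2])"
  unfolding pure_gens_def sw_def
  using da_beta12_1 da_beta12_2 da_beta13_1 da_beta13_2 da_beta14_1 da_beta14_2
    da_beta23_1 da_beta23_2 da_beta24_1 da_beta24_2 da_beta34_1 da_beta34_2 by auto

lemma swb: "w \<in> pure_gens \<Longrightarrow> sw w (tclass G [s1, s2, s1, s2]) (tclass G [s1, s2, inv s2 \<otimes> s1 \<otimes> s2, s1 \<otimes> s2 \<otimes> inv s1])"
  unfolding pure_gens_def sw_def
  using db_beta12_1 db_beta12_2 db_beta13_1 db_beta13_2 db_beta14_1 db_beta14_2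
    db_beta23_1 db_beta23_2 db_beta24_1 db_beta24_2 db_beta34_1 db_beta34_2 by auto

lemma swc: "w \<in> pure_gens \<Longrightarrow> sw w (tclass G [s1, s2, s2, inv s2 \<otimes> s1 \<otimes> s2]) (tclass G [s1, s2, s1 \<otimes> s2 \<otimes> inv s1, s1])"
  unfolding pure_gens_def sw_def
  using dc_beta12_1 dc_beta12_2 dc_beta13_1 dc_beta13_2 dc_beta14_1 dc_beta14_2
    dc_beta23_1 dc_beta23_2 dc_beta24_1 dc_beta24_2 dc_beta34_1 dc_beta34_2 by auto

lemma b13: "beta13 \<in> pure_gens" and b12: "beta12 \<in> pure_gens" by (simp_all add: pure_gens_def)

lemma orba: "B4_orbit G (tclass G [s1, s1, s2, s1 \<otimes> s2 \<otimes> inv s1]) = {tclass G [s1, s1, s2, s1 \<otimes> s2 \<otimes> inv s1], tclass G [s1, s2 \<otimes> s1 \<otimes> inv s2, s2, s2]} \<and> card {tclass G [s1, s1, s2, s1 \<otimes> s2 \<otimes> inv s1], tclass G [s1, s2 \<otimes> s1 \<otimes> inv s2, s2, s2]} = 2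
   \<and> card (rho4_image G {tclass G [s1, s1, s2, s1 \<otimes> s2 \<otimes> inv s1], tclass G [s1, s2 \<otimes> s1 \<otimes> inv s2, s2, s2]}) = 2"
  by (rule orbit_result[OF tvs(1,2) refl refl nea swa b13 da_beta13_1])

lemma orbb: "B4_orbit G (tclass G [s1, s2, s1, s2]) = {tclass G [s1, s2, s1, s2], tclass G [s1, s2, inv s2 \<otimes> s1 \<otimes> s2, s1 \<otimes> s2 \<otimes> inv s1]} \<and> card {tclass G [s1, s2, s1, s2], tclass G [s1, s2, inv s2 \<otimes> s1 \<otimes> s2, s1 \<otimes> s2 \<otimes> inv s1]} = 2
   \<and> card (rho4_image G {tclass G [s1, s2, s1, s2], tclass G [s1, s2, inv s2 \<otimes> s1 \<otimes> s2, s1 \<otimes> s2 \<otimes> inv s1]}) = 2"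
  by (rule orbit_result[OF tvs(3,4) refl refl neb swb b12 db_beta12_1])

lemma orbc: "B4_orbit G (tclass G [s1, s2, s2, inv s2 \<otimes> s1 \<otimes> s2]) = {tclass G [s1, s2, s2, inv s2 \<otimes> s1 \<otimes> s2], tclass G [s1, s2, s1 \<otimes> s2 \<otimes> inv s1, s1]} \<and> card {tclass G [s1, s2, s2, inv s2 \<otimes> s1 \<otimes> s2], tclass G [s1, s2, s1 \<otimes> s2 \<otimes> inv s1, s1]} = 2
   \<and> card (rho4_image G {tclass G [s1, s2, s2, inv s2 \<otimes> s1 \<otimes> s2], tclass G [s1, s2, s1 \<otimes> s2 \<otimes> inv s1, s1]}) = 2"
  by (rule orbit_result[OF tvs(5,6) refl refl nec swc b12 dc_beta12_1])

lemma gena: "genus G {tclass G [s1, s1, s2, s1 \<otimes> s2 \<otimes> inv s1], tclass G [s1, s2 \<otimes> s1 \<otimes> inv s2, s2, s2]} = 0"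
  unfolding genus_def using orba
    nc_fix[OF nea da_beta12_1 da_beta12_2] nc_swap[OF da_beta13_1 da_beta13_2] nc_swap[OF da_beta14_1 da_beta14_2]
  by simp

lemma genb: "genus G {tclass G [s1, s2, s1, s2], tclass G [s1, s2, inv s2 \<otimes> s1 \<otimes> s2, s1 \<otimes> s2 \<otimes> inv s1]} = 0"
  unfolding genus_def using orbb
    nc_swap[OF db_beta12_1 db_beta12_2] nc_fix[OF neb db_beta13_1 db_beta13_2] nc_swap[OF db_beta14_1 db_beta14_2]
  by simp

lemma genc: "genus G {tclass G [s1, s2, s2, inv s2 \<otimes> s1 \<otimes> s2], tclass G [s1, s2, s1 \<otimes> s2 \<otimes> inv s1, s1]} = 0"
  unfolding genus_def using orbc
    nc_swap[OF dc_beta12_1 dc_beta12_2] nc_swap[OF dc_beta13_1 dc_beta13_2] nc_fix[OF nec dc_beta14_1 dc_beta14_2]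
  by simp

lemma siga: "{tclass G [s1, s1, s2, s1 \<otimes> s2 \<otimes> inv s1], tclass G [s1, s2 \<otimes> s1 \<otimes> inv s2, s2, s2]} \<subseteq> Sigma_i G (conj_class G s1) (conj_class G s1) (conj_class G s2) (conj_class G s2)"
  using sig[of "[s1, s1, s2, s1 \<otimes> s2 \<otimes> inv s1]"] sig[of "[s1, s2 \<otimes> s1 \<otimes> inv s2, s2, s2]"] prods s1 s2c
  by (simp add: conj_class_self conj_class_l conj_class_r)

lemma sigb: "{tclass G [s1, s2, s1, s2], tclass G [s1, s2, inv s2 \<otimes> s1 \<otimes> s2, s1 \<otimes> s2 \<otimes> inv s1]} \<subseteq> Sigma_i G (conj_class G s1) (conj_class G s2) (conj_class G s1) (conj_class G s2)"
  using sig[of "[s1, s2, s1, s2]"] sig[of "[s1, s2, inv s2 \<otimes> s1 \<otimes> s2, s1 \<otimes> s2 \<otimes> inv s1]"] prods s1 s2c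
  by (simp add: conj_class_self conj_class_l conj_class_r)

lemma sigc: "{tclass G [s1, s2, s2, inv s2 \<otimes> s1 \<otimes> s2], tclass G [s1, s2, s1 \<otimes> s2 \<otimes> inv s1, s1]} \<subseteq> Sigma_i G (conj_class G s1) (conj_class G s2) (conj_class G s2) (conj_class G s1)"
  using sig[of "[s1, s2, s2, inv s2 \<otimes> s1 \<otimes> s2]"] sig[of "[s1, s2, s1 \<otimes> s2 \<otimes> inv s1, s1]"] prods s1 s2c
  by (simp add: conj_class_self conj_class_l conj_class_r)

end

theorem theorem2:
  fixes G (structure) and s1 s2 :: 'a
  assumes "group G" and "finite (carrier G)" and "carrier G \<noteq> {\<one>}"
    and "grp_center G = {\<one>}"
    and "s1 \<in> carrier G" and "s2 \<in> carrier G"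
    and "generate G {s1, s2} = carrier G"
    and "group.ord G (s1 \<otimes> s2) = 2"
  defines "e1 \<equiv> tclass G [s1, s1, s2, s1 \<otimes> s2 \<otimes> inv s1]"
    and "e2 \<equiv> cact G beta13 (tclass G [s1, s1, s2, s1 \<otimes> s2 \<otimes> inv s1])"
    and "e3 \<equiv> tclass G [s1, s2, s1, s2]"
    and "e4 \<equiv> cact G beta12 (tclass G [s1, s2, s1, s2])"
    and "e5 \<equiv> tclass G [s1, s2, s2, inv s2 \<otimes> s1 \<otimes> s2]"
    and "e6 \<equiv> cact G beta12 (tclass G [s1, s2, s2, inv s2 \<otimes> s1 \<otimes> s2])"
  shows
   "(e2 = tclass G [s1, s2 \<otimes> s1 \<otimes> inv s2, s2, s2] \<and>
    {e1, e2} \<subseteq> Sigma_i G (conj_class G s1) (conj_class G s1) (conj_class G s2) (conj_class G s2) \<and>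
    B4_orbit G e1 = {e1, e2} \<and> card {e1, e2} = 2 \<and>
    cact G beta12 e1 = e1 \<and> cact G beta12 e2 = e2 \<and>
    cact G beta13 e1 = e2 \<and> cact G beta13 e2 = e1 \<and>
    cact G beta14 e1 = e2 \<and> cact G beta14 e2 = e1 \<and>
    card (rho4_image G {e1, e2}) = 2 \<and>
    genus G {e1, e2} = 0) \<and>
   (e4 = tclass G [s1, s2, inv s2 \<otimes> s1 \<otimes> s2, s1 \<otimes> s2 \<otimes> inv s1] \<and>
    {e3, e4} \<subseteq> Sigma_i G (conj_class G s1) (conj_class G s2) (conj_class G s1) (conj_class G s2) \<and>
    B4_orbit G e3 = {e3, e4} \<and> card {e3, e4} = 2 \<and>
    cact G beta12 e3 = e4 \<and> cact G beta12 e4 = e3 \<and>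
    cact G beta14 e3 = e4 \<and> cact G beta14 e4 = e3 \<and>
    cact G beta13 e3 = e3 \<and> cact G beta13 e4 = e4 \<and>
    card (rho4_image G {e3, e4}) = 2 \<and>
    genus G {e3, e4} = 0) \<and>
   (e6 = tclass G [s1, s2, s1 \<otimes> s2 \<otimes> inv s1, s1] \<and>
    {e5, e6} \<subseteq> Sigma_i G (conj_class G s1) (conj_class G s2) (conj_class G s2) (conj_class G s1) \<and>
    B4_orbit G e5 = {e5, e6} \<and> card {e5, e6} = 2 \<and>
    cact G beta12 e5 = e6 \<and> cact G beta12 e6 = e5 \<and>
    cact G beta13 e5 = e6 \<and> cact G beta13 e6 = e5 \<and>
    cact G beta14 e5 = e5 \<and> cact G beta14 e6 = e6 \<and>
    card (rho4_image G {e5, e6}) = 2 \<and>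
    genus G {e5, e6} = 0)"
  proof -
  interpret group G by (rule assms(1))
  have s1: "s1 \<in> carrier G" and s2c: "s2 \<in> carrier G" using assms by auto
  have c: "s1 \<otimes> s2 \<in> carrier G" using s1 s2c by simp
  have "(s1 \<otimes> s2) [^] group.ord G (s1 \<otimes> s2) = \<one>" using c by (rule pow_ord_eq_1)
  then have "(s1 \<otimes> s2) [^] (2::nat) = \<one>" using assms(8) by simp
  then have cc: "(s1 \<otimes> s2) \<otimes> (s1 \<otimes> s2) = \<one>" using c by (simp add: numeral_2_eq_2)
  have s2e: "s2 = inv s1 \<otimes> (s1 \<otimes> s2)" using s1 s2c by (simp add: m_assoc[symmetric])
  interpret T: thm_ctx2 G s1 s2 "s1 \<otimes> s2"
    by unfold_locales (use assms s1 c cc s2e in auto)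
  have E2: "e2 = tclass G [s1, s2 \<otimes> s1 \<otimes> inv s2, s2, s2]" unfolding e2_def by (rule T.da_beta13_1)
  have E4: "e4 = tclass G [s1, s2, inv s2 \<otimes> s1 \<otimes> s2, s1 \<otimes> s2 \<otimes> inv s1]" unfolding e4_def by (rule T.db_beta12_1)
  have E6: "e6 = tclass G [s1, s2, s1 \<otimes> s2 \<otimes> inv s1, s1]" unfolding e6_def by (rule T.dc_beta12_1)
  show ?thesis unfolding E2 E4 E6 e1_def e3_def e5_def
    by (simp only: simp_thms T.siga T.sigb T.sigc T.orba T.orbb T.orbc T.gena T.genb T.genc
      T.da_beta12_1 T.da_beta12_2 T.da_beta13_1 T.da_beta13_2 T.da_beta14_1 T.da_beta14_2
      T.db_beta12_1 T.db_beta12_2 T.db_beta13_1 T.db_beta13_2 T.db_beta14_1 T.db_beta14_2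
      T.dc_beta12_1 T.dc_beta12_2 T.dc_beta13_1 T.dc_beta13_2 T.dc_beta14_1 T.dc_beta14_2)
qed

end
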